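(* Consider the M/G/1 queue with Poisson arrivals of rate $\lambda$ and service time distribution $G_\epsilon=(1-\epsilon)F_p+\epsilon F_h$, $\epsilon\in[0,1)$, where $F_p$ is a phase-type distribution with mean $\mu_p$ and $F_h$ is a heavy-tailed distribution with finite mean $\mu_h$, and assume $\lambda\mu_p<1$. Let $V_\epsilon$ be the stationary workload, $V=V_0$, $\tilde v_\epsilon(s)=E[e^{-sV_\epsilon}]$, and let $c$ be the function on $[0,\infty)$ with $\int_0^\infty e^{-st}c(t)\,dt=-\frac1s\,\partial_\epsilon\tilde v_\epsilon(s)|_{\epsilon=0}$ (the first-order correction term of $t\mapsto\Pr(V_\epsilon>t)$). Let $V'$ be a copy of $V$ and $B_p^e,B_h^e$ random variables with the stationary excess distributions of $F_p$ and $F_h$, all mutually independent. Then the corrected phase-type approximation $\Pr(V>t)+\epsilon c(t)$ takes the form \[ \Pr(V>t)+\epsilon\,\frac{\lambda}{1-\lambda\mu_p}\Big((\mu_p-\mu_h)\Pr(V>t)+\mu_h\Pr(V+V'+B_h^e>t)-\mu_p\Pr(V+V'+B_p^e>t)\Big), \] i.e. $c(t)=\frac{\lambda}{1-\lambda\mu_p}\big((\mu_p-\mu_h)\Pr(V>t)+\mu_h\Pr(V+V'+B_h^e>t)-\mu_p\Pr(V+V'+B_p^e>t)\big)$ for $t\ge0$.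
   Context: The stationary excess distribution of a distribution $F$ on $[0,\infty)$ with finite mean $\mu_F$ is the distribution with density $(1-F(x))/\mu_F$, $x\ge 0$. The paper denotes $c$ by $\mathcal L^{-1}\{\tilde v(s)k(s)\}$, where $k$ is defined by $\tilde v_\epsilon(s)=\tilde v_0(s)+\epsilon\tilde v_0(s)k(s)+O(\epsilon^2)$. *)

theory Defs
  imports "HOL-Probability.Probability"
begin

definition nonneg_distr :: "real measure \<Rightarrow> bool" where
  "nonneg_distr F \<longleftrightarrow> prob_space F \<and> sets F = sets borel \<and> (AE x in F. 0 \<le> x)"

definition mean :: "real measure \<Rightarrow> real" where
  "mean F = (\<integral>x. x \<partial>F)"

definition mmult :: "nat \<Rightarrow> (nat \<Rightarrow> nat \<Rightarrow> real) \<Rightarrow> (nat \<Rightarrow> nat \<Rightarrow> real) \<Rightarrow> nat \<Rightarrow> nat \<Rightarrow> real" where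
  "mmult m A B = (\<lambda>i j. \<Sum>k<m. A i k * B k j)"

fun mpow :: "nat \<Rightarrow> (nat \<Rightarrow> nat \<Rightarrow> real) \<Rightarrow> nat \<Rightarrow> nat \<Rightarrow> nat \<Rightarrow> real" where
  "mpow m T 0 = (\<lambda>i j. if i = j then 1 else 0)"
| "mpow m T (Suc k) = mmult m (mpow m T k) T"

definition mexp :: "nat \<Rightarrow> (nat \<Rightarrow> nat \<Rightarrow> real) \<Rightarrow> real \<Rightarrow> nat \<Rightarrow> nat \<Rightarrow> real" where
  "mexp m T x = (\<lambda>i j. \<Sum>k. x ^ k / fact k * mpow m T k i j)"

text \<open>Phase-type distribution PH(alpha, T) of order m: absorption time of a finite
  continuous-time Markov chain with initial distribution alpha on the m transient states and
  nonsingular sub-generator T; its distribution function is 1 - alpha exp(T x) 1.\<close>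
definition phase_type :: "real measure \<Rightarrow> bool" where
  "phase_type F \<longleftrightarrow> nonneg_distr F \<and>
     (\<exists>(m::nat) (\<alpha>::nat \<Rightarrow> real) (T::nat \<Rightarrow> nat \<Rightarrow> real).
        m \<ge> 1 \<and>
        (\<forall>i<m. 0 \<le> \<alpha> i) \<and> (\<Sum>i<m. \<alpha> i) = 1 \<and>
        (\<forall>i<m. \<forall>j<m. i \<noteq> j \<longrightarrow> 0 \<le> T i j) \<and>
        (\<forall>i<m. (\<Sum>j<m. T i j) \<le> 0) \<and>
        (\<forall>v::nat \<Rightarrow> real. (\<forall>i<m. (\<Sum>j<m. T i j * v j) = 0) \<longrightarrow> (\<forall>j<m. v j = 0)) \<and>
        (\<forall>x\<ge>0. measure F {..x} = 1 - (\<Sum>i<m. \<Sum>j<m. \<alpha> i * mexp m T x i j)))"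

definition heavy_tailed :: "real measure \<Rightarrow> bool" where
  "heavy_tailed F \<longleftrightarrow> (\<forall>\<delta>>0. (\<integral>\<^sup>+ x. ennreal (exp (\<delta> * x)) \<partial>F) = \<infinity>)"

definition mix :: "real \<Rightarrow> real measure \<Rightarrow> real measure \<Rightarrow> real measure" where
  "mix \<epsilon> M N = measure_of (space M) (sets M)
      (\<lambda>A. ennreal (1 - \<epsilon>) * emeasure M A + ennreal \<epsilon> * emeasure N A)"

definition excess :: "real measure \<Rightarrow> real measure" where
  "excess F = density lborel
      (\<lambda>x. ennreal (indicator {0..} x * (1 - measure F {..x}) / mean F))"

text \<open>Law V of the stationary workload of the stable M/G/1 queue with arrival rate lam and
  service time distribution G, characterised by the Pollaczek-Khinchine transform.\<close>
definition mg1_workload :: "real \<Rightarrow> real measure \<Rightarrow> real measure \<Rightarrow> bool" where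
  "mg1_workload lam G V \<longleftrightarrow> nonneg_distr V \<and>
     (\<forall>s>0. (\<integral>x. exp (- s * x) \<partial>V) =
        (1 - lam * mean G) * s / (s - lam * (1 - (\<integral>x. exp (- s * x) \<partial>G))))"

end

theory Submission
  imports Defs
begin

lemma rderiv_zero_bound:
  fixes f :: "real \<Rightarrow> real"
  assumes ab: "a \<le> b" and cont: "continuous_on {a..b} f"
    and der: "\<And>x. x \<in> {a..<b} \<Longrightarrow> (f has_real_derivative 0) (at x within {x..b})"
    and e: "e > 0"
  shows "\<bar>f b - f a\<bar> \<le> e * (b - a)"
proof (rule ccontr)
  assume nb: "\<not> ?thesis"
  define A where "A = {x\<in>{a..b}. e * (x - a) < \<bar>f x - f a\<bar>}"
  have bA: "b \<in> A" using nb ab unfolding A_def by auto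
  have bdd: "bdd_below A" unfolding A_def by (rule bdd_belowI[of _ a]) auto
  define m where "m = Inf A"
  have mle: "m \<le> z" if "z \<in> A" for z using cInf_lower[OF that bdd] m_def by simp
  have am: "a \<le> m" unfolding m_def using bA by (intro cInf_greatest) (auto simp: A_def)
  have mb: "m \<le> b" using mle[OF bA] .
  have gcont: "continuous_on {a..b} (\<lambda>y. \<bar>f y - f a\<bar> - e * (y - a))"
    by (intro continuous_intros cont)
  show False
  proof (cases "m \<in> A")
    case True
    then have g: "\<bar>f m - f a\<bar> - e * (m - a) > 0" unfolding A_def by auto
    have ma: "m > a" proof (rule ccontr)
      assume "\<not> m > a" then have "m = a" using am by auto
      then show False using g by simp
    qed
    have "continuous (at m within {a..b}) (\<lambda>y. \<bar>f y - f a\<bar> - e * (y - a))"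
      using gcont am mb by (simp add: continuous_on_eq_continuous_within)
    then obtain d where d: "d > 0" and dd: "\<And>y. y \<in> {a..b} \<Longrightarrow> dist y m < d \<Longrightarrow>
        dist (\<bar>f y - f a\<bar> - e * (y - a)) (\<bar>f m - f a\<bar> - e * (m - a)) < \<bar>f m - f a\<bar> - e * (m - a)"
      using g unfolding continuous_within_eps_delta by blast
    define y where "y = max a (m - d/2)"
    have y: "y \<in> {a..b}" "dist y m < d" "y < m" using d am mb ma unfolding y_def dist_real_def by auto
    have "\<bar>f y - f a\<bar> - e * (y - a) > 0" using dd[OF y(1,2)] unfolding dist_real_def by linarith
    then have "y \<in> A" using y unfolding A_def by auto
    then show False using mle y by force
  next
    case False
    have mA: "\<bar>f m - f a\<bar> \<le> e * (m - a)" using False am mb unfolding A_def by auto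
    have mltb: "m < b" using False bA mle[OF bA] by (cases "m = b") auto
    have "(f has_real_derivative 0) (at m within {m..b})" using der am mltb by auto
    then have "((\<lambda>y. (f y - f m) / (y - m)) \<longlongrightarrow> 0) (at m within {m..b})"
      by (simp add: has_field_derivative_iff)
    then have "eventually (\<lambda>y. dist ((f y - f m) / (y - m)) 0 < e) (at m within {m..b})"
      using e tendstoD by blast
    then obtain d where d: "d > 0" and dd: "\<And>y. y \<in> {m..b} \<Longrightarrow> y \<noteq> m \<Longrightarrow> dist y m < d \<Longrightarrow>
        dist ((f y - f m) / (y - m)) 0 < e"
      unfolding eventually_at by blast
    define m' where "m' = min b (m + d/2)"
    have mm': "m < m'" using mltb d unfolding m'_def by auto
    have "m' \<le> z" if z: "z \<in> A" for z
    proof (rule ccontr)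
      assume "\<not> m' \<le> z"
      then have zl: "z < m'" by simp
      have mz: "m \<le> z" using mle z .
      have zm: "z \<noteq> m" using z False by auto
      have zin: "z \<in> {m..b}" "dist z m < d" using mz zl d unfolding m'_def dist_real_def by auto
      have "\<bar>(f z - f m) / (z - m)\<bar> < e" using dd[OF zin(1) zm zin(2)] by simp
      then have "\<bar>f z - f m\<bar> < e * (z - m)" using mz zm
        by (simp add: abs_divide divide_less_eq)
      then have "\<bar>f z - f a\<bar> \<le> e * (z - a)" using mA by (simp add: algebra_simps abs_le_iff abs_less_iff)
      then show False using z unfolding A_def by auto
    qed
    then have "m' \<le> m" unfolding m_def using bA by (intro cInf_greatest) auto
    then show False using mm' by simp
  qed
qed

lemma rderiv_zero_const:
  fixes f :: "real \<Rightarrow> real"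
  assumes ab: "a \<le> b" and cont: "continuous_on {a..b} f"
    and der: "\<And>x. x \<in> {a..<b} \<Longrightarrow> (f has_real_derivative 0) (at x within {x..b})"
  shows "f b = f a"
proof -
  have "\<bar>f b - f a\<bar> \<le> e" if "e > 0" for e
  proof (cases "a = b")
    case True then show ?thesis using that by simp
  next
    case False
    then have "b - a > 0" using ab by simp
    then have "\<bar>f b - f a\<bar> \<le> (e / (b - a)) * (b - a)"
      using rderiv_zero_bound[OF ab cont der, of "e / (b - a)"] that by auto
    then show ?thesis using \<open>b - a > 0\<close> by simp
  qed
  then have "\<bar>f b - f a\<bar> \<le> 0" by (meson dense not_le)
  then show ?thesis by simp
qed


lemma has_integral_Ici_lim:
  fixes f :: "real \<Rightarrow> real"
  assumes "(f has_integral y) {a..}"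
  shows "((\<lambda>T. integral {a..T} f) \<longlongrightarrow> y) at_top"
proof (rule tendstoI)
  fix e :: real assume e: "e > 0"
  have nc: "\<not> (\<exists>c d. {a..} = cbox c (d::real))"
  proof
    assume "\<exists>c d. {a..} = cbox c (d::real)"
    then obtain c d where "{a..} = cbox c (d::real)" by blast
    then have "max a d + 1 \<in> cbox c d" by auto
    then show False by auto
  qed
  obtain B where B: "B > 0" and BB: "\<forall>c d. ball 0 B \<subseteq> cbox c d \<longrightarrow>
      (\<exists>z. ((\<lambda>x. if x \<in> {a..} then f x else 0) has_integral z) (cbox c d) \<and> norm (z - y) < e)"
    using has_integral_altD[OF assms nc e] by blast
  show "eventually (\<lambda>T. dist (integral {a..T} f) y < e) at_top"
    unfolding eventually_at_top_linorder
  proof (intro exI allI impI)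
    fix T assume T: "T \<ge> B"
    define c where "c = - B - \<bar>a\<bar>"
    have "ball 0 B \<subseteq> cbox c T" using T unfolding c_def by (auto simp: dist_real_def)
    then obtain z where z: "((\<lambda>x. if x \<in> {a..} then f x else 0) has_integral z) (cbox c T)"
       "norm (z - y) < e" using BB by blast
    have "(f has_integral z) ({a..} \<inter> cbox c T)" using z(1) has_integral_restrict_Int by blast
    moreover have "{a..} \<inter> cbox c T = {a..T}" using B unfolding c_def by auto
    ultimately have "(f has_integral z) {a..T}" by metis
    then have "integral {a..T} f = z" by (rule integral_unique)
    then show "dist (integral {a..T} f) y < e" using z(2) by (simp add: dist_norm)
  qed
qed


lemma rderiv_indef:
  fixes f :: "real \<Rightarrow> real"
  assumes int: "f integrable_on {a..b}" and x: "a \<le> x" "x \<le> b"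
    and c: "continuous (at x within {x..b}) f"
  shows "((\<lambda>y. integral {a..y} f) has_real_derivative f x) (at x within {x..b})"
proof -
  have ix: "f integrable_on {x..b}" using int x by (intro integrable_on_subinterval[OF int]) auto
  have c': "continuous (at x within {x..b}) f" using c .
  have "((\<lambda>y. integral {x..y} f) has_vector_derivative f x) (at x within {x..b} - {})"
    using integral_has_vector_derivative_continuous_at[of f x b x "{}"] ix c' x by auto
  then have d1: "((\<lambda>y. integral {x..y} f) has_real_derivative f x) (at x within {x..b})"
    by (simp add: has_real_derivative_iff_has_vector_derivative)
  have d2: "((\<lambda>y. integral {a..x} f + integral {x..y} f) has_real_derivative f x) (at x within {x..b})"
    using DERIV_add[OF DERIV_const d1] by simp
  show ?thesis
  proof (rule has_field_derivative_transform_within[OF d2 zero_less_one])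
    show "x \<in> {x..b}" using x by auto
    fix y assume "y \<in> {x..b}" "dist y x < 1"
    then show "integral {a..x} f + integral {x..y} f = integral {a..y} f"
    proof -
      have "f integrable_on {a..y}" using \<open>y \<in> {x..b}\<close> x by (intro integrable_on_subinterval[OF int]) auto
      then show ?thesis using Henstock_Kurzweil_Integration.integral_combine[of a x y f] x \<open>y \<in> {x..b}\<close> by auto
    qed
  qed
qed

lemma laplace_parts:
  fixes h :: "real \<Rightarrow> real"
  assumes hint: "\<And>s. s > 0 \<Longrightarrow> (\<lambda>t. exp (- s * t) * h t) integrable_on {0..}"
    and hrc: "\<And>t. t \<ge> 0 \<Longrightarrow> continuous (at_right t) h"
    and s: "s > 0" and T: "T \<ge> 0"
  shows "integral {0..T} (\<lambda>u. exp (- (s + 1) * u) * h u) =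
         exp (- s * T) * integral {0..T} (\<lambda>u. exp (- u) * h u)
         + s * integral {0..T} (\<lambda>u. exp (- s * u) * integral {0..u} (\<lambda>v. exp (- v) * h v))"
proof -
  define k where "k = (\<lambda>u. exp (- u) * h u)"
  define g where "g = (\<lambda>u. exp (- (s + 1) * u) * h u)"
  define \<phi> where "\<phi> = (\<lambda>y. integral {0..y} k)"
  define q where "q = (\<lambda>u. exp (- s * u) * \<phi> u)"
  have kint: "k integrable_on {0..b}" for b
    using hint[of 1] by (intro integrable_on_subinterval[of _ "{0..}"]) (auto simp: k_def)
  have gint: "g integrable_on {0..b}" for b
    using hint[of "s+1"] s by (intro integrable_on_subinterval[of _ "{0..}"]) (auto simp: g_def)
  have hc: "continuous (at x within {x..b}) h" if "x \<ge> 0" for x b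
  proof -
    have "continuous (at x within {x..}) h" using hrc[OF that] by (simp add: at_within_Ici_at_right)
    then show ?thesis by (rule continuous_within_subset) auto
  qed
  have kc: "continuous (at x within {x..b}) k" if "x \<ge> 0" for x b
    unfolding k_def by (intro continuous_intros hc that)
  have gc: "continuous (at x within {x..b}) g" if "x \<ge> 0" for x b
    unfolding g_def by (intro continuous_intros hc that)
  have phic: "continuous_on {0..b} \<phi>" for b
    unfolding \<phi>_def by (rule indefinite_integral_continuous_1[OF kint])
  have qc: "continuous_on {0..b} q" for b
    unfolding q_def by (intro continuous_intros phic)
  have qint: "q integrable_on {0..b}" for b
    by (rule integrable_continuous_interval[OF qc])
  have gcont: "continuous_on {0..b} (\<lambda>y. integral {0..y} g)" for b
    by (rule indefinite_integral_continuous_1[OF gint])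
  have qcont: "continuous_on {0..b} (\<lambda>y. integral {0..y} q)" for b
    by (rule indefinite_integral_continuous_1[OF qint])
  define \<Psi> where "\<Psi> = (\<lambda>y. integral {0..y} g - exp (- s * y) * \<phi> y - s * integral {0..y} q)"
  have "\<Psi> T = \<Psi> 0"
  proof (rule rderiv_zero_const[OF T])
    show "continuous_on {0..T} \<Psi>" unfolding \<Psi>_def
      by (intro continuous_intros gcont qcont phic)
    fix x assume x: "x \<in> {0..<T}"
    have d1: "((\<lambda>y. integral {0..y} g) has_real_derivative g x) (at x within {x..T})"
      using x by (intro rderiv_indef gint gc) auto
    have d2: "(\<phi> has_real_derivative k x) (at x within {x..T})"
      unfolding \<phi>_def using x by (intro rderiv_indef kint kc) auto
    have d3: "((\<lambda>y. integral {0..y} q) has_real_derivative q x) (at x within {x..T})"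
    proof (intro rderiv_indef qint)
      have "continuous (at x within {0..T}) q" using x qc[of T] by (simp add: continuous_on_eq_continuous_within)
      then show "continuous (at x within {x..T}) q" by (rule continuous_within_subset) (use x in auto)
    qed (use x in auto)
    have d4: "((\<lambda>y. exp (- s * y)) has_real_derivative (- s) * exp (- s * x)) (at x within {x..T})"
      by (auto intro!: derivative_eq_intros)
    have "(\<Psi> has_real_derivative (g x - ((- s) * exp (- s * x) * \<phi> x + k x * exp (- s * x)) - s * q x))
       (at x within {x..T})"
      unfolding \<Psi>_def using DERIV_mult[OF d4 d2] by (intro DERIV_diff d1 d3 DERIV_cmult)
    moreover have "g x - ((- s) * exp (- s * x) * \<phi> x + k x * exp (- s * x)) - s * q x = 0"
      unfolding g_def k_def q_def by (simp add: algebra_simps flip: exp_add)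
    ultimately show "(\<Psi> has_real_derivative 0) (at x within {x..T})" by simp
  qed
  then have "\<Psi> T = 0" unfolding \<Psi>_def \<phi>_def by simp
  then show ?thesis unfolding \<Psi>_def q_def \<phi>_def g_def k_def by simp
qed


lemma cont_Ici_from_Icc:
  fixes \<phi> :: "real \<Rightarrow> real"
  assumes "\<And>b. continuous_on {0..b} \<phi>"
  shows "continuous_on {0..} \<phi>"
  unfolding continuous_on_eq_continuous_within
proof
  fix x :: real assume x: "x \<in> {0..}"
  have "continuous (at x within {0..x+1}) \<phi>"
    using assms[of "x+1"] x by (simp add: continuous_on_eq_continuous_within)
  moreover have "at x within {0..x+1} = at x within {0..}"
    by (rule at_within_nhd[of x "{..<x+1}"]) auto
  ultimately show "continuous (at x within {0..}) \<phi>" by simp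
qed

lemma bounded_Ici:
  fixes \<phi> :: "real \<Rightarrow> real"
  assumes c: "continuous_on {0..} \<phi>" and l: "(\<phi> \<longlongrightarrow> 0) at_top"
  obtains M where "M > 0" "\<And>u. u \<ge> 0 \<Longrightarrow> \<bar>\<phi> u\<bar> \<le> M"
proof -
  have "eventually (\<lambda>u. dist (\<phi> u) 0 < 1) at_top" using l tendstoD zero_less_one by blast
  then obtain B where B: "\<And>u. u \<ge> B \<Longrightarrow> \<bar>\<phi> u\<bar> < 1"
    unfolding eventually_at_top_linorder by auto
  have "compact (\<phi> ` {0..max 0 B})"
    by (rule compact_continuous_image[OF continuous_on_subset[OF c]]) auto
  then obtain M1 where M1: "\<And>y. y \<in> \<phi> ` {0..max 0 B} \<Longrightarrow> norm y \<le> M1"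
    using compact_imp_bounded bounded_iff by metis
  show ?thesis
  proof (rule that[of "max 1 M1 + 1"])
    fix u :: real assume u: "u \<ge> 0"
    show "\<bar>\<phi> u\<bar> \<le> max 1 M1 + 1"
    proof (cases "u \<le> max 0 B")
      case True then have "norm (\<phi> u) \<le> M1" using u by (intro M1) auto
      then show ?thesis by simp
    next
      case False then have "\<bar>\<phi> u\<bar> < 1" using B by auto
      then show ?thesis by simp
    qed
  qed simp
qed

lemma G_cont:
  fixes \<phi> :: "real \<Rightarrow> real"
  assumes c: "continuous_on {0..} \<phi>" and M: "\<And>u. u \<ge> 0 \<Longrightarrow> \<bar>\<phi> u\<bar> \<le> M"
  shows "continuous_on {0..1} (\<lambda>x. if x = 0 then 0 else x * \<phi> (- ln x))"
  unfolding continuous_on_eq_continuous_within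
proof
  define G where "G = (\<lambda>x::real. if x = 0 then 0 else x * \<phi> (- ln x))"
  fix x :: real assume x: "x \<in> {0..1}"
  show "continuous (at x within {0..1}) (\<lambda>x. if x = 0 then 0 else x * \<phi> (- ln x))"
  proof (cases "x = 0")
    case True
    have "(G \<longlongrightarrow> 0) (at 0 within {0..1})"
    proof (rule Lim_null_comparison)
      show "eventually (\<lambda>y. norm (G y) \<le> \<bar>M\<bar> * \<bar>y\<bar>) (at 0 within {0..1})"
        unfolding eventually_at_filter
      proof (intro always_eventually allI impI)
        fix y :: real assume y: "y \<noteq> 0" "y \<in> {0..1}"
        then have "- ln y \<ge> 0" by auto
        then have "\<bar>\<phi> (- ln y)\<bar> \<le> \<bar>M\<bar>" using M by fastforce
        then show "norm (G y) \<le> \<bar>M\<bar> * \<bar>y\<bar>" using y unfolding G_def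
          by (auto simp: abs_mult mult.commute intro: mult_right_mono)
      qed
      show "((\<lambda>y. \<bar>M\<bar> * \<bar>y\<bar>) \<longlongrightarrow> 0) (at 0 within {0..1})"
        by (auto intro!: tendsto_eq_intros)
    qed
    then have "continuous (at 0 within {0..1}) G" unfolding continuous_within by (simp add: G_def)
    then show ?thesis using True by (simp add: G_def)
  next
    case False
    then have xp: "x > 0" using x by auto
    have l: "continuous_on {0<..1::real} (\<lambda>x. - ln x)" by (intro continuous_intros) auto
    have "continuous_on {0<..1} (\<lambda>x. \<phi> (- ln x))"
      by (rule continuous_on_compose2[OF c l]) auto
    then have "continuous_on {0<..1} (\<lambda>x. x * \<phi> (- ln x))" by (intro continuous_intros)
    then have "continuous_on {0<..1} G"
      by (rule continuous_on_eq) (auto simp: G_def)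
    then have "continuous (at x within {0<..1}) G"
      using x xp by (simp add: continuous_on_eq_continuous_within)
    moreover have "at x within {0<..1} = at x within {0..1}"
      by (rule at_within_nhd[of x "{0<..}"]) (use xp in auto)
    ultimately show ?thesis unfolding G_def by simp
  qed
qed

lemma exp_neg_lim: "s > 0 \<Longrightarrow> ((\<lambda>T::real. exp (- s * T)) \<longlongrightarrow> 0) at_top"
  apply (rule filterlim_compose[OF exp_at_bot])
  apply (rule filterlim_tendsto_neg_mult_at_bot[OF tendsto_const])
  apply simp
  apply (rule filterlim_ident)
  done

lemma laplace_unique:
  fixes h :: "real \<Rightarrow> real"
  assumes hlap: "\<And>s. s > 0 \<Longrightarrow> ((\<lambda>t. exp (- s * t) * h t) has_integral 0) {0..}"
    and hrc: "\<And>t. t \<ge> 0 \<Longrightarrow> continuous (at_right t) h"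
    and t: "t \<ge> 0"
  shows "h t = 0"
proof -
  define k where "k = (\<lambda>u. exp (- u) * h u)"
  define \<phi> where "\<phi> = (\<lambda>y. integral {0..y} k)"
  have hint: "\<And>s. s > 0 \<Longrightarrow> (\<lambda>t. exp (- s * t) * h t) integrable_on {0..}"
    using hlap by blast
  have kint: "k integrable_on {0..b}" for b
    using hint[of 1] by (intro integrable_on_subinterval[of _ "{0..}"]) (auto simp: k_def)
  have phic: "continuous_on {0..b} \<phi>" for b
    unfolding \<phi>_def by (rule indefinite_integral_continuous_1[OF kint])
  have phiC: "continuous_on {0..} \<phi>" by (rule cont_Ici_from_Icc[OF phic])
  have phil: "(\<phi> \<longlongrightarrow> 0) at_top"
    using has_integral_Ici_lim[OF hlap[of 1]] by (simp add: \<phi>_def k_def)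
  obtain M where M: "M > 0" "\<And>u. u \<ge> 0 \<Longrightarrow> \<bar>\<phi> u\<bar> \<le> M"
    using bounded_Ici[OF phiC phil] by blast
  define I where "I = (\<lambda>s T. integral {0..T} (\<lambda>u. exp (- s * u) * \<phi> u))"
  have qint: "(\<lambda>u. exp (- s * u) * \<phi> u) integrable_on {0..T}" for s T
    by (intro integrable_continuous_interval continuous_intros phic)
  have Ilim: "((\<lambda>T. I s T) \<longlongrightarrow> 0) at_top" if s: "s > 0" for s
  proof -
    have ev: "eventually (\<lambda>T. (integral {0..T} (\<lambda>u. exp (- (s + 1) * u) * h u) - exp (- s * T) * \<phi> T) / s
              = I s T) at_top"
      using eventually_ge_at_top[of 0]
    proof eventually_elim
      case (elim T)
      from laplace_parts[OF hint hrc s elim] show ?case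
        using s unfolding I_def \<phi>_def k_def by (simp add: field_simps)
    qed
    have "((\<lambda>T. (integral {0..T} (\<lambda>u. exp (- (s + 1) * u) * h u) - exp (- s * T) * \<phi> T) / s)
            \<longlongrightarrow> (0 - 0 * 0) / s) at_top"
      using s by (intro tendsto_intros has_integral_Ici_lim hlap phil exp_neg_lim) auto
    then have "((\<lambda>T. (integral {0..T} (\<lambda>u. exp (- (s + 1) * u) * h u) - exp (- s * T) * \<phi> T) / s)
            \<longlongrightarrow> 0) at_top" by simp
    then show ?thesis using ev by (rule Lim_transform_eventually)
  qed
  define J where "J = (\<lambda>T. integral {0..T} (\<lambda>u. exp (- u) * (exp (- u) * \<phi> u) * \<phi> u))"
  have Fc: "continuous_on {0..b} (\<lambda>u. exp (- u) * (exp (- u) * \<phi> u) * \<phi> u)" for b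
    by (intro continuous_intros phic)
  have Fint: "(\<lambda>u. exp (- u) * (exp (- u) * \<phi> u) * \<phi> u) integrable_on {0..b}" for b
    by (rule integrable_continuous_interval[OF Fc])
  have Fnn: "0 \<le> exp (- u) * (exp (- u) * \<phi> u) * \<phi> u" for u
  proof -
    have "exp (- u) * (exp (- u) * \<phi> u) * \<phi> u = (exp (- u) * \<phi> u)^2" by (simp add: power2_eq_square)
    then show ?thesis by simp
  qed
  have Jmono: "J T0 \<le> J T" if "0 \<le> T0" "T0 \<le> T" for T0 T
    unfolding J_def using that by (intro integral_subset_le Fint Fnn ballI) auto
  have Jsmall: "J T0 \<le> e * (M + 1)" if T0: "T0 \<ge> 0" and e: "e > 0" for T0 e
  proof -
    define G where "G = (\<lambda>x::real. if x = 0 then 0 else x * \<phi> (- ln x))"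
    have Gc: "continuous_on {0..1} G" unfolding G_def by (rule G_cont[OF phiC M(2)])
    obtain p where p: "real_polynomial_function p" and pG: "\<And>x. x \<in> {0..1} \<Longrightarrow> \<bar>G x - p x\<bar> < e"
      using Stone_Weierstrass_real_polynomial_function[OF compact_Icc Gc e] by blast
    obtain a n where pa: "p = (\<lambda>x. \<Sum>i\<le>n. a i * x ^ i)"
      using p real_polynomial_function_iff_sum by auto
    define P where "P = (\<lambda>T. integral {0..T} (\<lambda>u. exp (- u) * p (exp (- u)) * \<phi> u))"
    have Peq: "P T = (\<Sum>i\<le>n. a i * I (real i + 1) T)" for T
    proof -
      have "(\<lambda>u. exp (- u) * p (exp (- u)) * \<phi> u) =
            (\<lambda>u. \<Sum>i\<le>n. a i * (exp (- (real i + 1) * u) * \<phi> u))"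
      proof
        fix u :: real
        have "exp (- (real i + 1) * u) = exp (- u) * exp (- u) ^ i" for i
          by (simp add: exp_of_nat_mult[symmetric] flip: exp_add) (simp add: algebra_simps)
        then show "exp (- u) * p (exp (- u)) * \<phi> u = (\<Sum>i\<le>n. a i * (exp (- (real i + 1) * u) * \<phi> u))"
          unfolding pa by (simp add: sum_distrib_left sum_distrib_right algebra_simps)
      qed
      then have "P T = integral {0..T} (\<lambda>u. \<Sum>i\<le>n. a i * (exp (- (real i + 1) * u) * \<phi> u))"
        unfolding P_def by simp
      also have "\<dots> = (\<Sum>i\<le>n. integral {0..T} (\<lambda>u. a i * (exp (- (real i + 1) * u) * \<phi> u)))"
        by (rule integral_sum) (auto intro!: integrable_continuous_interval continuous_intros phic)
      also have "\<dots> = (\<Sum>i\<le>n. a i * I (real i + 1) T)"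
        unfolding I_def by (simp add: integral_mult_right)
      finally show ?thesis .
    qed
    have Plim: "(P \<longlongrightarrow> 0) at_top"
    proof -
      have "((\<lambda>T. \<Sum>i\<le>n. a i * I (real i + 1) T) \<longlongrightarrow> (\<Sum>i\<le>n. a i * 0)) at_top"
        by (intro tendsto_intros Ilim) auto
      moreover have "P = (\<lambda>T. \<Sum>i\<le>n. a i * I (real i + 1) T)" using Peq by auto
      ultimately show ?thesis by simp
    qed
    have pc: "continuous_on UNIV p" unfolding pa by (intro continuous_intros)
    have diff: "\<bar>J T - P T\<bar> \<le> e * M" if T: "T \<ge> 0" for T
    proof -
      have "J T - P T = integral {0..T} (\<lambda>u. exp (- u) * (exp (- u) * \<phi> u - p (exp (- u))) * \<phi> u)"
      proof -
        have i2: "(\<lambda>u. exp (- u) * p (exp (- u)) * \<phi> u) integrable_on {0..T}"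
          by (intro integrable_continuous_interval continuous_intros phic
              continuous_on_compose2[OF pc]) auto
        show ?thesis unfolding J_def P_def
          using integral_diff[OF Fint i2, symmetric] by (simp add: algebra_simps)
      qed
      also have "\<bar>\<dots>\<bar> \<le> integral {0..T} (\<lambda>u. exp (- u) * (e * M))"
      proof -
        have "norm (integral {0..T} (\<lambda>u. exp (- u) * (exp (- u) * \<phi> u - p (exp (- u))) * \<phi> u))
           \<le> integral {0..T} (\<lambda>u. exp (- u) * (e * M))"
        proof (rule integral_norm_bound_integral)
          show "(\<lambda>u. exp (- u) * (exp (- u) * \<phi> u - p (exp (- u))) * \<phi> u) integrable_on {0..T}"
            by (intro integrable_continuous_interval continuous_intros phic
              continuous_on_compose2[OF pc]) auto
          show "(\<lambda>u. exp (- u) * (e * M)) integrable_on {0..T}"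
            by (intro integrable_continuous_interval continuous_intros)
          fix u assume u: "u \<in> {0..T}"
          have eu: "exp (- u) \<in> {0..1}" using u by auto
          have Geq: "G (exp (- u)) = exp (- u) * \<phi> u" unfolding G_def by simp
          have b1: "\<bar>exp (- u) * \<phi> u - p (exp (- u))\<bar> \<le> e" using pG[OF eu] Geq by simp
          have b2: "\<bar>\<phi> u\<bar> \<le> M" using M(2) u by auto
          have "\<bar>exp (- u) * (exp (- u) * \<phi> u - p (exp (- u))) * \<phi> u\<bar>
                = exp (- u) * (\<bar>exp (- u) * \<phi> u - p (exp (- u))\<bar> * \<bar>\<phi> u\<bar>)"
            by (simp add: abs_mult)
          also have "\<dots> \<le> exp (- u) * (e * M)"
            using b1 b2 by (intro mult_left_mono mult_mono) auto
          finally show "norm (exp (- u) * (exp (- u) * \<phi> u - p (exp (- u))) * \<phi> u) \<le> exp (- u) * (e * M)"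
            by simp
        qed
        then show ?thesis by simp
      qed
      also have "\<dots> = e * M * (1 - exp (- T))"
      proof -
        have "((\<lambda>u. exp (- u) * (e * M)) has_integral ((- exp (- T) * (e * M)) - (- exp (- 0) * (e * M)))) {0..T}"
          using T by (intro fundamental_theorem_of_calculus)
             (auto intro!: derivative_eq_intros simp: has_real_derivative_iff_has_vector_derivative[symmetric])
        then have "integral {0..T} (\<lambda>u. exp (- u) * (e * M)) = (- exp (- T) * (e * M)) - (- exp (- 0) * (e * M))"
          by (rule integral_unique)
        then show ?thesis by (simp add: algebra_simps)
      qed
      also have "\<dots> \<le> e * M" using e M(1) by (simp add: mult_left_le)
      finally show ?thesis .
    qed
    have "eventually (\<lambda>T. dist (P T) 0 < e) at_top" using Plim e tendstoD by blast
    moreover have "eventually (\<lambda>T. T \<ge> T0) at_top" by (rule eventually_ge_at_top)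
    ultimately obtain T where PT: "\<bar>P T\<bar> < e" and TT: "T \<ge> T0"
      by (metis (mono_tags, lifting) eventually_at_top_linorder dist_real_def diff_zero order_refl eventually_conj_iff)
    have "J T0 \<le> J T" using Jmono T0 TT by auto
    also have "\<dots> \<le> e * M + \<bar>P T\<bar>" using diff[of T] TT T0 by linarith
    also have "\<dots> \<le> e * (M + 1)" using PT by (simp add: algebra_simps)
    finally show ?thesis .
  qed
  have J0: "J T0 = 0" if "T0 \<ge> 0" for T0
  proof -
    have "J T0 \<le> 0"
    proof (rule field_le_epsilon)
      fix e :: real assume e: "e > 0"
      have "J T0 \<le> (e / (M + 1)) * (M + 1)" using Jsmall[OF that, of "e / (M+1)"] e M(1) by auto
      then show "J T0 \<le> 0 + e" using M(1) by simp
    qed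
    moreover have "J T0 \<ge> 0" unfolding J_def using that by (intro integral_nonneg Fint Fnn)
    ultimately show ?thesis by simp
  qed
  have phi0: "\<phi> u = 0" if u: "u \<ge> 0" for u
  proof -
    have "\<forall>x\<in>{0..u+1}. exp (- x) * (exp (- x) * \<phi> x) * \<phi> x = 0"
      using J0[of "u+1"] u integral_eq_0_iff[OF Fc[of "u+1"]] Fnn unfolding J_def by auto
    then have "exp (- u) * (exp (- u) * \<phi> u) * \<phi> u = 0" using u by auto
    then show ?thesis by simp
  qed
  have hc: "continuous (at t within {t..t+1}) h"
  proof -
    have "continuous (at t within {t..}) h" using hrc[OF t] by (simp add: at_within_Ici_at_right)
    then show ?thesis by (rule continuous_within_subset) auto
  qed
  have d1: "(\<phi> has_real_derivative k t) (at t within {t..t+1})"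
    unfolding \<phi>_def using t by (intro rderiv_indef kint) (auto simp: k_def intro!: continuous_intros hc)
  have d2: "(\<phi> has_real_derivative 0) (at t within {t..t+1})"
  proof (rule has_field_derivative_transform_within[OF DERIV_const zero_less_one])
    show "t \<in> {t..t+1}" by auto
    fix y assume "y \<in> {t..t+1}" then show "0 = \<phi> y" using phi0 t by auto
  qed
  have "at t within {t..t+1} \<noteq> bot" by (simp add: at_within_Icc_at_right)
  then have "k t = 0" using has_field_derivative_unique[OF d1 d2] by simp
  then show ?thesis by (simp add: k_def)
qed


lemma sets_mix [simp, measurable_cong]: "sets (mix e M N) = sets M"
  by (simp add: mix_def)

lemma space_mix [simp]: "space (mix e M N) = space M"
  by (simp add: mix_def)

lemma emeasure_mix:
  assumes sN: "sets N = sets M"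
  shows "emeasure (mix e M N) A = ennreal (1 - e) * emeasure M A + ennreal e * emeasure N A"
  (is "_ = ?\<mu> A")
proof (cases "A \<in> sets M")
  case True
  show ?thesis unfolding mix_def
  proof (rule emeasure_measure_of_sigma)
    show "sigma_algebra (space M) (sets M)" ..
    show "positive (sets M) ?\<mu>" by (simp add: positive_def)
    show "countably_additive (sets M) ?\<mu>"
    proof (rule countably_additiveI)
      fix A :: "nat \<Rightarrow> _"  assume *: "range A \<subseteq> sets M" "disjoint_family A"
      have *: "range A \<subseteq> sets N" "disjoint_family A" using * sN by auto
      have "(\<Sum>i. ?\<mu> (A i)) = ennreal (1 - e) * (\<Sum>i. emeasure M (A i)) + ennreal e * (\<Sum>i. emeasure N (A i))"
        by (simp add: suminf_add[symmetric])
      also have "\<dots> = ?\<mu> (\<Union>i. A i)" using * sN by (simp add: suminf_emeasure)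
      finally show "(\<Sum>i. ?\<mu> (A i)) = ?\<mu> (\<Union>i. A i)" .
    qed
  qed (fact True)
qed (simp add: emeasure_notin_sets sN)

lemma nn_integral_mix:
  assumes sN: "sets N = sets M" and f: "f \<in> borel_measurable M"
  shows "nn_integral (mix e M N) f = ennreal (1 - e) * nn_integral M f + ennreal e * nn_integral N f"
  using f
proof induction
  case (cong f g)
  have "space N = space M" using sN by (rule sets_eq_imp_space_eq)
  with cong show ?case
    by (simp add: cong.hyps cong: nn_integral_cong_simp)
next
  case (set A)
  then show ?case using sN by (simp add: emeasure_mix)
next
  case (mult f c)
  have fN: "f \<in> borel_measurable N" using mult(2) by (simp add: measurable_cong_sets[OF sN refl])
  have fX: "f \<in> borel_measurable (mix e M N)" using mult(2) by (simp add: measurable_cong_sets[OF sets_mix refl])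
  have "(\<integral>\<^sup>+x. c * f x \<partial>mix e M N) = c * (ennreal (1 - e) * nn_integral M f + ennreal e * nn_integral N f)"
    using nn_integral_cmult[OF fX] mult(4) by simp
  also have "\<dots> = ennreal (1 - e) * (c * nn_integral M f) + ennreal e * (c * nn_integral N f)"
    by (simp only: distrib_left ac_simps)
  also have "\<dots> = ennreal (1 - e) * (\<integral>\<^sup>+x. c * f x \<partial>M) + ennreal e * (\<integral>\<^sup>+x. c * f x \<partial>N)"
    using nn_integral_cmult[OF mult(2)] nn_integral_cmult[OF fN] by simp
  finally show ?case .
next
  case (add f g)
  have "f \<in> borel_measurable N" "g \<in> borel_measurable N" using add(1,3) by (simp_all add: measurable_cong_sets[OF sN refl])
  moreover have "f \<in> borel_measurable (mix e M N)" "g \<in> borel_measurable (mix e M N)"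
    using add(1,3) by (simp_all add: measurable_cong_sets[OF sets_mix refl])
  ultimately show ?case using add(6,7) add(1,3)
    by (simp add: nn_integral_add distrib_left ac_simps)
next
  case (seq U)
  have UN: "\<And>i. U i \<in> borel_measurable N" using seq(1) by (simp add: measurable_cong_sets[OF sN refl])
  have UX: "\<And>i. U i \<in> borel_measurable (mix e M N)" using seq(1) by (simp add: measurable_cong_sets[OF sets_mix refl])
  have mc: "integral\<^sup>N X (Sup (range U)) = (SUP i. integral\<^sup>N X (U i))"
    if "\<And>i. U i \<in> borel_measurable X" for X :: "real measure"
  proof -
    have "Sup (range U) = (\<lambda>x. SUP i. U i x)" by (rule ext) (simp add: SUP_apply[symmetric])
    then show ?thesis using nn_integral_monotone_convergence_SUP[OF seq(3) that] by simp
  qed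
  have "nn_integral (mix e M N) (Sup (range U)) = (SUP i. nn_integral (mix e M N) (U i))"
    by (rule mc[OF UX])
  also have "\<dots> = (SUP i. ennreal (1 - e) * nn_integral M (U i) + ennreal e * nn_integral N (U i))"
    using seq by simp
  also have "\<dots> = (SUP i. ennreal (1 - e) * nn_integral M (U i)) + (SUP i. ennreal e * nn_integral N (U i))"
  proof (rule ennreal_SUP_add[of "\<lambda>i. ennreal (1 - e) * integral\<^sup>N M (U i)" "\<lambda>i. ennreal e * integral\<^sup>N N (U i)", simplified])
    show "incseq (\<lambda>i. ennreal (1 - e) * integral\<^sup>N M (U i))"
      using seq(3) unfolding incseq_def le_fun_def by (auto intro!: mult_left_mono nn_integral_mono)
    show "incseq (\<lambda>i. ennreal e * integral\<^sup>N N (U i))"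
      using seq(3) unfolding incseq_def le_fun_def by (auto intro!: mult_left_mono nn_integral_mono)
  qed
  also have "\<dots> = ennreal (1 - e) * (SUP i. nn_integral M (U i)) + ennreal e * (SUP i. nn_integral N (U i))"
    by (simp add: SUP_mult_left_ennreal)
  also have "\<dots> = ennreal (1 - e) * nn_integral M (Sup (range U)) + ennreal e * nn_integral N (Sup (range U))"
    using mc[OF seq(1)] mc[OF UN] by simp
  finally show ?case .
qed


lemma AE_mix:
  assumes sN: "sets N = sets M" and "AE x in M. P x" "AE x in N. P x"
    and meas: "{x \<in> space M. \<not> P x} \<in> sets M"
  shows "AE x in mix e M N. P x"
proof -
  have sp: "space N = space M" using sN by (rule sets_eq_imp_space_eq)
  have "emeasure M {x \<in> space M. \<not> P x} = 0" using assms(2) meas AE_iff_measurable by blast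
  moreover have "emeasure N {x \<in> space M. \<not> P x} = 0" using assms(3) meas AE_iff_measurable sp sN by metis
  ultimately have "emeasure (mix e M N) {x \<in> space M. \<not> P x} = 0" by (simp add: emeasure_mix[OF sN])
  then show ?thesis using meas by (subst AE_iff_measurable) auto
qed

lemma integral_mix:
  fixes f :: "real \<Rightarrow> real"
  assumes sN: "sets N = sets M" and sM: "sets M = sets borel"
    and f: "f \<in> borel_measurable borel"
    and nnM: "AE x in M. 0 \<le> f x" and nnN: "AE x in N. 0 \<le> f x"
    and iM: "integrable M f" and iN: "integrable N f"
    and e: "0 \<le> e" "e \<le> 1"
  shows "integral\<^sup>L (mix e M N) f = (1 - e) * integral\<^sup>L M f + e * integral\<^sup>L N f"
proof -
  have fM: "f \<in> borel_measurable M" using f by (simp add: measurable_cong_sets[OF sM refl])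
  have fX: "f \<in> borel_measurable (mix e M N)" using fM by (simp add: measurable_cong_sets[OF sets_mix refl])
  have meas: "{x \<in> space M. \<not> 0 \<le> f x} \<in> sets M" using fM by measurable
  have nnX: "AE x in mix e M N. 0 \<le> f x" by (rule AE_mix[OF sN nnM nnN meas])
  have "integral\<^sup>L (mix e M N) f = enn2real (\<integral>\<^sup>+x. ennreal (f x) \<partial>mix e M N)"
    by (rule integral_eq_nn_integral[OF fX nnX])
  also have "\<dots> = enn2real (ennreal (1 - e) * ennreal (integral\<^sup>L M f) + ennreal e * ennreal (integral\<^sup>L N f))"
    using nn_integral_mix[OF sN, of "\<lambda>x. ennreal (f x)" e] fM
      nn_integral_eq_integral[OF iM nnM] nn_integral_eq_integral[OF iN nnN] by simp
  also have "\<dots> = (1 - e) * integral\<^sup>L M f + e * integral\<^sup>L N f"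
  proof -
    have "0 \<le> integral\<^sup>L M f" "0 \<le> integral\<^sup>L N f" using nnM nnN by (simp_all add: integral_nonneg_AE)
    then show ?thesis using e by (simp add: ennreal_mult''[symmetric] ennreal_plus[symmetric] del: ennreal_plus)
  qed
  finally show ?thesis .
qed


lemma surv_nn:
  fixes M :: "real measure"
  assumes sM: "sets M = sets borel" and fin: "finite_measure M"
    and g: "g \<in> borel_measurable borel" and gnn: "\<And>t. 0 \<le> g t"
  shows "(\<integral>\<^sup>+t. ennreal (g t * indicator {0..} t) * emeasure M {t<..} \<partial>lborel)
       = (\<integral>\<^sup>+x. (\<integral>\<^sup>+t. ennreal (g t * indicator {0..<x} t) \<partial>lborel) \<partial>M)"
proof -
  have ps: "pair_sigma_finite M lborel"
    unfolding pair_sigma_finite_def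
    using finite_measure.sigma_finite_measure[OF fin] lborel.sigma_finite_measure_axioms by auto
  have eqf: "(\<lambda>(x::real, t::real). ennreal (g t * indicator {0..<x} t))
           = (\<lambda>(x, t). ennreal (g t * (if 0 \<le> t \<and> t < x then 1 else 0)))"
    by (auto simp: indicator_def fun_eq_iff)
  have m1: "(\<lambda>(x::real, t::real). ennreal (g t * (if 0 \<le> t \<and> t < x then 1 else 0))) \<in> borel_measurable (borel \<Otimes>\<^sub>M borel)"
    using g by measurable
  have sp: "sets (M \<Otimes>\<^sub>M lborel) = sets (borel \<Otimes>\<^sub>M borel)"
    by (rule sets_pair_measure_cong[OF sM]) simp
  have meas: "(\<lambda>(x, t). ennreal (g t * indicator {0..<x} t)) \<in> borel_measurable (M \<Otimes>\<^sub>M lborel)"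
    using m1 unfolding eqf by (simp add: measurable_cong_sets[OF sp refl])
  have pt: "ennreal (g t * indicator {0..} t) * emeasure M {t<..} = (\<integral>\<^sup>+x. ennreal (g t * indicator {0..<x} t) \<partial>M)" for t
  proof -
    have st: "{t<..} \<in> sets M" using sM by simp
    have "(\<integral>\<^sup>+x. ennreal (g t * indicator {0..<x} t) \<partial>M) = (\<integral>\<^sup>+x. ennreal (g t * indicator {0..} t) * indicator {t<..} x \<partial>M)"
      by (intro nn_integral_cong) (auto simp: indicator_def)
    also have "\<dots> = ennreal (g t * indicator {0..} t) * emeasure M {t<..}"
      using st by (simp add: nn_integral_cmult_indicator)
    finally show ?thesis by simp
  qed
  have "(\<integral>\<^sup>+t. ennreal (g t * indicator {0..} t) * emeasure M {t<..} \<partial>lborel)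
      = (\<integral>\<^sup>+t. (\<integral>\<^sup>+x. ennreal (g t * indicator {0..<x} t) \<partial>M) \<partial>lborel)"
    by (simp add: pt)
  also have "\<dots> = (\<integral>\<^sup>+x. (\<integral>\<^sup>+t. ennreal (g t * indicator {0..<x} t) \<partial>lborel) \<partial>M)"
    using pair_sigma_finite.Fubini'[OF ps, of "\<lambda>x t. ennreal (g t * indicator {0..<x} t)"] meas by simp
  finally show ?thesis .
qed

lemma inner_exp:
  fixes s x :: real
  assumes s: "s > 0" and x: "x \<ge> 0"
  shows "(\<integral>\<^sup>+t. ennreal (exp (- s * t) * indicator {0..<x} t) \<partial>lborel) = ennreal ((1 - exp (- s * x)) / s)"
proof -
  have "((\<lambda>t. exp (- s * t)) has_integral ((- exp (- s * x) / s) - (- exp (- s * 0) / s))) {0..x}"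
    using x s by (intro fundamental_theorem_of_calculus)
       (auto intro!: derivative_eq_intros simp: has_real_derivative_iff_has_vector_derivative[symmetric])
  then have hi: "((\<lambda>t. exp (- s * t)) has_integral ((1 - exp (- s * x)) / s)) {0..x}"
    by (simp add: diff_divide_distrib)
  have "(\<integral>\<^sup>+t. ennreal (exp (- s * t) * indicator {0..<x} t) \<partial>lborel)
      = (\<integral>\<^sup>+t. ennreal (indicator {0..x} t * exp (- s * t)) \<partial>lborel)"
    by (intro nn_integral_cong_AE) (use AE_lborel_singleton[of x] in \<open>eventually_elim, auto simp: indicator_def\<close>)
  also have "\<dots> = ennreal ((1 - exp (- s * x)) / s)"
    by (rule nn_integral_has_integral_lebesgue[OF _ hi]) simp
  finally show ?thesis .
qed

lemma inner_one:
  fixes x :: real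
  assumes x: "x \<ge> 0"
  shows "(\<integral>\<^sup>+t. ennreal (1 * indicator {0..<x} t) \<partial>lborel) = ennreal x"
proof -
  have "(\<integral>\<^sup>+t. ennreal (1 * indicator {0..<x} t) \<partial>lborel) = (\<integral>\<^sup>+t. indicator {0..<x} t \<partial>lborel)"
    by (intro nn_integral_cong) (auto simp: indicator_def)
  also have "\<dots> = ennreal x" using x by (simp add: emeasure_lborel_Ico)
  finally show ?thesis .
qed

lemma lap_integrable:
  fixes M :: "real measure"
  assumes sM: "sets M = sets borel" and fin: "finite_measure M" and nn: "AE x in M. 0 \<le> x" and s: "s \<ge> 0"
  shows "integrable M (\<lambda>x. exp (- s * x))"
proof (rule finite_measure.integrable_const_bound[OF fin, of _ 1])
  show "AE x in M. norm (exp (- s * x)) \<le> 1" using nn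
  proof eventually_elim
    case (elim x) then have "- s * x \<le> 0" using s by (simp add: mult_nonneg_nonneg)
    then show ?case by simp
  qed
  show "(\<lambda>x. exp (- s * x)) \<in> borel_measurable M" by (simp add: measurable_cong_sets[OF sM refl])
qed

lemma surv_laplace_nn:
  fixes M :: "real measure"
  assumes sM: "sets M = sets borel" and fin: "finite_measure M" and nn: "AE x in M. 0 \<le> x" and s: "s > 0"
  shows "(\<integral>\<^sup>+t. ennreal (exp (- s * t) * indicator {0..} t) * emeasure M {t<..} \<partial>lborel)
       = ennreal ((measure M (space M) - (\<integral>x. exp (- s * x) \<partial>M)) / s)"
proof -
  have "(\<integral>\<^sup>+t. ennreal (exp (- s * t) * indicator {0..} t) * emeasure M {t<..} \<partial>lborel)
       = (\<integral>\<^sup>+x. (\<integral>\<^sup>+t. ennreal (exp (- s * t) * indicator {0..<x} t) \<partial>lborel) \<partial>M)"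
    by (rule surv_nn[OF sM fin]) auto
  also have "\<dots> = (\<integral>\<^sup>+x. ennreal ((1 - exp (- s * x)) / s) \<partial>M)"
    by (intro nn_integral_cong_AE, rule eventually_mono[OF nn], rule inner_exp[OF s])
  also have "\<dots> = ennreal (\<integral>x. (1 - exp (- s * x)) / s \<partial>M)"
  proof (rule nn_integral_eq_integral)
    have "integrable M (\<lambda>x. 1 - exp (- s * x))"
      using lap_integrable[OF sM fin nn, of s] s finite_measure.integrable_const[OF fin] by (intro Bochner_Integration.integrable_diff) auto
    then show "integrable M (\<lambda>x. (1 - exp (- s * x)) / s)" by simp
    show "AE x in M. 0 \<le> (1 - exp (- s * x)) / s" using nn
    proof eventually_elim
      case (elim x) then have "- s * x \<le> 0" using s by (simp add: mult_nonneg_nonneg)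
      then show ?case using s by simp
    qed
  qed
  also have "(\<integral>x. (1 - exp (- s * x)) / s \<partial>M) = (measure M (space M) - (\<integral>x. exp (- s * x) \<partial>M)) / s"
  proof -
    have "(\<integral>x. 1 - exp (- s * x) \<partial>M) = (\<integral>x. 1 \<partial>M) - (\<integral>x. exp (- s * x) \<partial>M)"
      using lap_integrable[OF sM fin nn, of s] s finite_measure.integrable_const[OF fin]
      by (intro Bochner_Integration.integral_diff) auto
    then show ?thesis by simp
  qed
  finally show ?thesis .
qed

lemma surv_mean_nn:
  fixes M :: "real measure"
  assumes sM: "sets M = sets borel" and fin: "finite_measure M" and nn: "AE x in M. 0 \<le> x"
    and int: "integrable M (\<lambda>x. x)"
  shows "(\<integral>\<^sup>+t. ennreal (1 * indicator {0..} t) * emeasure M {t<..} \<partial>lborel) = ennreal (\<integral>x. x \<partial>M)"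
proof -
  have "(\<integral>\<^sup>+t. ennreal (1 * indicator {0..} t) * emeasure M {t<..} \<partial>lborel)
       = (\<integral>\<^sup>+x. (\<integral>\<^sup>+t. ennreal (1 * indicator {0..<x} t) \<partial>lborel) \<partial>M)"
    by (rule surv_nn[OF sM fin]) auto
  also have "\<dots> = (\<integral>\<^sup>+x. ennreal x \<partial>M)"
    by (intro nn_integral_cong_AE, rule eventually_mono[OF nn], rule inner_one)
  also have "\<dots> = ennreal (\<integral>x. x \<partial>M)" by (rule nn_integral_eq_integral[OF int nn])
  finally show ?thesis .
qed


lemma conv_AE_nonneg:
  fixes M N :: "real measure"
  assumes sM: "sets M = sets borel" and sN: "sets N = sets borel"
    and fM: "finite_measure M" and fN: "finite_measure N"
    and nM: "AE x in M. 0 \<le> x" and nN: "AE x in N. 0 \<le> x"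
  shows "AE x in M \<star> N. 0 \<le> x"
proof -
  have "emeasure (M \<star> N) {..<0} = (\<integral>\<^sup>+x. \<integral>\<^sup>+y. indicator {..<0} (x + y) \<partial>N \<partial>M)"
    by (rule convolution_emeasure'[OF _ fM fN sN sM]) simp
  also have "\<dots> = (\<integral>\<^sup>+x. 0 \<partial>M)"
  proof (rule nn_integral_cong_AE)
    show "AE x in M. (\<integral>\<^sup>+y. indicator {..<0} (x + y) \<partial>N) = 0" using nM
    proof eventually_elim
      case (elim x)
      have "(\<integral>\<^sup>+y. indicator {..<0} (x + y) \<partial>N) = (\<integral>\<^sup>+y. 0 \<partial>N)"
        by (rule nn_integral_cong_AE) (use nN elim in \<open>auto elim!: eventually_mono simp: indicator_def\<close>)
      then show ?case by simp
    qed
  qed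
  finally have "emeasure (M \<star> N) {..<0} = 0" by simp
  moreover have "{x \<in> space (M \<star> N). \<not> 0 \<le> x} = {..<0::real}" by auto
  ultimately show ?thesis by (subst AE_iff_measurable) auto
qed

lemma lap_conv:
  fixes M N :: "real measure"
  assumes sM: "sets M = sets borel" and sN: "sets N = sets borel"
    and fM: "finite_measure M" and fN: "finite_measure N"
  shows "(\<integral>x. exp (- s * x) \<partial>(M \<star> N)) = (\<integral>x. exp (- s * x) \<partial>M) * (\<integral>x. exp (- s * x) \<partial>N)"
proof -
  have e: "(\<integral>x. exp (- s * x) \<partial>K) = enn2real (\<integral>\<^sup>+x. ennreal (exp (- s * x)) \<partial>K)"
    if "sets K = sets borel" for K :: "real measure"
    by (rule integral_eq_nn_integral) (auto simp: measurable_cong_sets[OF that refl])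
  have "(\<integral>\<^sup>+x. ennreal (exp (- s * x)) \<partial>(M \<star> N)) = (\<integral>\<^sup>+x. \<integral>\<^sup>+y. ennreal (exp (- s * (x + y))) \<partial>N \<partial>M)"
    by (rule nn_integral_convolution[OF fM fN sN sM]) simp
  also have "\<dots> = (\<integral>\<^sup>+x. ennreal (exp (- s * x)) * (\<integral>\<^sup>+y. ennreal (exp (- s * y)) \<partial>N) \<partial>M)"
  proof (rule nn_integral_cong)
    fix x
    have "(\<integral>\<^sup>+y. ennreal (exp (- s * (x + y))) \<partial>N) = (\<integral>\<^sup>+y. ennreal (exp (- s * x)) * ennreal (exp (- s * y)) \<partial>N)"
      by (intro nn_integral_cong) (simp add: ennreal_mult[symmetric] exp_add[symmetric] algebra_simps)
    also have "\<dots> = ennreal (exp (- s * x)) * (\<integral>\<^sup>+y. ennreal (exp (- s * y)) \<partial>N)"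
      by (rule nn_integral_cmult) (simp add: measurable_cong_sets[OF sN refl])
    finally show "(\<integral>\<^sup>+y. ennreal (exp (- s * (x + y))) \<partial>N) = ennreal (exp (- s * x)) * (\<integral>\<^sup>+y. ennreal (exp (- s * y)) \<partial>N)" .
  qed
  also have "\<dots> = (\<integral>\<^sup>+x. ennreal (exp (- s * x)) \<partial>M) * (\<integral>\<^sup>+y. ennreal (exp (- s * y)) \<partial>N)"
    by (rule nn_integral_multc) (simp add: measurable_cong_sets[OF sM refl])
  finally show ?thesis
    using e[OF sM] e[OF sN] e[of "M \<star> N"] by (simp add: enn2real_mult)
qed


lemma excess_facts:
  fixes F :: "real measure"
  assumes F: "nonneg_distr F" and int: "integrable F (\<lambda>x. x)" and mu: "mean F > 0"
  shows "sets (excess F) = sets borel" "AE x in excess F. 0 \<le> x" "prob_space (excess F)"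
    "\<And>s. s > 0 \<Longrightarrow> (\<integral>x. exp (- s * x) \<partial>excess F) = (1 - (\<integral>x. exp (- s * x) \<partial>F)) / (s * mean F)"
proof -
  have P: "prob_space F" and sF: "sets F = sets borel" and nF: "AE x in F. 0 \<le> x"
    using F unfolding nonneg_distr_def by auto
  interpret P: prob_space F by (rule P)
  have spF: "space F = UNIV" using sets_eq_imp_space_eq[OF sF] by simp
  have finF: "finite_measure F" by (rule P.finite_measure_axioms)
  define \<rho> where "\<rho> = (\<lambda>x. ennreal (indicator {0..} x * (1 - measure F {..x}) / mean F))"
  have ex: "excess F = density lborel \<rho>" unfolding excess_def \<rho>_def by simp
  have mono: "mono (\<lambda>x. measure F {..x})"
    by (auto simp: mono_def intro!: P.finite_measure_mono simp: sF)
  have mm: "(\<lambda>x. measure F {..x}) \<in> borel_measurable borel" by (rule borel_measurable_mono[OF mono])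
  have \<rho>m: "\<rho> \<in> borel_measurable lborel" unfolding \<rho>_def using mm by measurable
  have compl: "1 - measure F {..x} = measure F {x<..}" for x
  proof -
    have "measure F (space F - {..x}) = 1 - measure F {..x}" by (rule P.prob_compl) (simp add: sF)
    moreover have "space F - {..x} = {x<..}" using spF by auto
    ultimately show ?thesis by simp
  qed
  have em: "emeasure F {x<..} = ennreal (1 - measure F {..x})" for x
    by (simp add: compl P.emeasure_eq_measure)
  have emm: "(\<lambda>x. emeasure F {x<..}) \<in> borel_measurable lborel"
    unfolding em using mm by measurable
  have \<rho>eq: "\<rho> x * ennreal (g x) = ennreal (g x * indicator {0..} x) * emeasure F {x<..} * ennreal (1 / mean F)"
    if "0 \<le> g x" for g x
  proof -
    have "emeasure F {x<..} = ennreal (measure F {x<..})" by (rule P.emeasure_eq_measure)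
    moreover have "measure F {x<..} \<ge> 0" by simp
    ultimately show ?thesis unfolding \<rho>_def compl using that mu
      by (simp add: ennreal_mult''[symmetric] ennreal_mult'[symmetric] mult_nonneg_nonneg divide_nonneg_pos ac_simps)
  qed
  show sE: "sets (excess F) = sets borel" unfolding ex by simp
  show "AE x in excess F. 0 \<le> x" unfolding ex
    by (subst AE_density[OF \<rho>m]) (auto simp: \<rho>_def indicator_def)
  show "prob_space (excess F)"
  proof (rule prob_spaceI)
    have "emeasure (excess F) (space (excess F)) = (\<integral>\<^sup>+x. \<rho> x * ennreal 1 \<partial>lborel)"
      unfolding ex by (simp add: emeasure_density[OF \<rho>m])
    also have "\<dots> = (\<integral>\<^sup>+x. ennreal (1 * indicator {0..} x) * emeasure F {x<..} * ennreal (1 / mean F) \<partial>lborel)"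
      by (intro nn_integral_cong \<rho>eq) simp
    also have "\<dots> = (\<integral>\<^sup>+x. ennreal (1 * indicator {0..} x) * emeasure F {x<..} \<partial>lborel) * ennreal (1 / mean F)"
      by (rule nn_integral_multc) (use emm in measurable)
    also have "\<dots> = ennreal (mean F) * ennreal (1 / mean F)"
      using surv_mean_nn[OF sF finF nF int] by (simp add: mean_def)
    also have "\<dots> = 1" using mu by (simp add: ennreal_mult''[symmetric])
    finally show "emeasure (excess F) (space (excess F)) = 1" .
  qed
  fix s :: real assume s: "s > 0"
  have "(\<integral>x. exp (- s * x) \<partial>excess F) = enn2real (\<integral>\<^sup>+x. ennreal (exp (- s * x)) \<partial>excess F)"
    by (rule integral_eq_nn_integral) (auto simp: measurable_cong_sets[OF sE refl])
  also have "(\<integral>\<^sup>+x. ennreal (exp (- s * x)) \<partial>excess F) = (\<integral>\<^sup>+x. \<rho> x * ennreal (exp (- s * x)) \<partial>lborel)"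
    unfolding ex by (rule nn_integral_density[OF \<rho>m]) simp
  also have "\<dots> = (\<integral>\<^sup>+x. ennreal (exp (- s * x) * indicator {0..} x) * emeasure F {x<..} * ennreal (1 / mean F) \<partial>lborel)"
    by (intro nn_integral_cong \<rho>eq) simp
  also have "\<dots> = (\<integral>\<^sup>+x. ennreal (exp (- s * x) * indicator {0..} x) * emeasure F {x<..} \<partial>lborel) * ennreal (1 / mean F)"
    by (rule nn_integral_multc) (use emm in measurable)
  also have "\<dots> = ennreal ((1 - (\<integral>x. exp (- s * x) \<partial>F)) / s) * ennreal (1 / mean F)"
    using surv_laplace_nn[OF sF finF nF s] by (simp add: P.prob_space)
  finally show "(\<integral>x. exp (- s * x) \<partial>excess F) = (1 - (\<integral>x. exp (- s * x) \<partial>F)) / (s * mean F)"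
  proof -
    assume *: "(\<integral>x. exp (- s * x) \<partial>excess F) = enn2real (ennreal ((1 - (\<integral>x. exp (- s * x) \<partial>F)) / s) * ennreal (1 / mean F))"
    have "(\<integral>x. exp (- s * x) \<partial>F) \<le> 1"
    proof -
      have "(\<integral>x. exp (- s * x) \<partial>F) \<le> (\<integral>x. 1 \<partial>F)"
        using lap_integrable[OF sF finF nF, of s] s nF
        by (intro integral_mono_AE) (auto elim!: eventually_mono simp: mult_nonneg_nonneg)
      then show ?thesis by (simp add: P.prob_space)
    qed
    then show ?thesis using * s mu by (simp add: enn2real_mult divide_nonneg_pos)
  qed
qed


lemma mean_zero_AE:
  fixes F :: "real measure"
  assumes F: "nonneg_distr F" and int: "integrable F (\<lambda>x. x)" and m0: "mean F = 0"
  shows "AE x in F. x = 0"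
proof -
  have nF: "AE x in F. 0 \<le> x" using F unfolding nonneg_distr_def by auto
  show ?thesis using integral_nonneg_eq_0_iff_AE[OF int nF] m0 unfolding mean_def by simp
qed

lemma mean_pos_heavy:
  fixes F :: "real measure"
  assumes F: "nonneg_distr F" and int: "integrable F (\<lambda>x. x)" and H: "heavy_tailed F"
  shows "mean F > 0"
proof -
  have P: "prob_space F" and nF: "AE x in F. 0 \<le> x" using F unfolding nonneg_distr_def by auto
  have "mean F \<ge> 0" unfolding mean_def using nF by (rule integral_nonneg_AE)
  moreover have "mean F \<noteq> 0"
  proof
    assume m0: "mean F = 0"
    have ae: "AE x in F. x = 0" by (rule mean_zero_AE[OF F int m0])
    have "(\<integral>\<^sup>+x. ennreal (exp (1 * x)) \<partial>F) = (\<integral>\<^sup>+x. 1 \<partial>F)"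
      by (rule nn_integral_cong_AE) (use ae in \<open>auto elim!: eventually_mono\<close>)
    also have "\<dots> = 1" using prob_space.emeasure_space_1[OF P] by simp
    finally have e1: "(\<integral>\<^sup>+x. ennreal (exp (1 * x)) \<partial>F) = 1" .
    have "(\<integral>\<^sup>+x. ennreal (exp (1 * x)) \<partial>F) = \<infinity>"
      using H unfolding heavy_tailed_def by (metis zero_less_one)
    then show False using e1 by simp
  qed
  ultimately show ?thesis by simp
qed

lemma mexp_zero: "mexp m T 0 i j = (if i = j then 1 else 0)"
proof -
  have "mexp m T 0 i j = (\<Sum>k. (mpow m T k i j / fact k) * 0 ^ k)"
    unfolding mexp_def by (simp add: mult.commute)
  also have "\<dots> = mpow m T 0 i j / fact 0" by (rule powser_zero)
  finally show ?thesis by simp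
qed

lemma mean_pos_phase:
  fixes F :: "real measure"
  assumes PH: "phase_type F" and int: "integrable F (\<lambda>x. x)"
  shows "mean F > 0"
proof -
  have F: "nonneg_distr F" using PH unfolding phase_type_def by auto
  then have P: "prob_space F" and sF: "sets F = sets borel" and nF: "AE x in F. 0 \<le> x"
    unfolding nonneg_distr_def by auto
  interpret P: prob_space F by (rule P)
  have spF: "space F = UNIV" using sets_eq_imp_space_eq[OF sF] by simp
  obtain m \<alpha> T where a1: "(\<Sum>i<m. \<alpha> i) = 1"
    and cdf: "\<forall>x\<ge>0. measure F {..x} = 1 - (\<Sum>i<m. \<Sum>j<m. \<alpha> i * mexp m T x i j)"
    using PH unfolding phase_type_def by blast
  have "measure F {..0} = 1 - (\<Sum>i<m. \<Sum>j<m. \<alpha> i * (if i = j then 1 else 0))"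
    using cdf by (simp add: mexp_zero)
  also have "\<dots> = 0" using a1 by (simp add: if_distrib sum.delta cong: if_cong)
  finally have z: "measure F {..0} = 0" .
  have "mean F \<ge> 0" unfolding mean_def using nF by (rule integral_nonneg_AE)
  moreover have "mean F \<noteq> 0"
  proof
    assume m0: "mean F = 0"
    have ae: "AE x in F. x \<in> {..0}" using mean_zero_AE[OF F int m0] by (auto elim!: eventually_mono)
    have "measure F {..0} = 1" using P.prob_eq_1[of "{..0}"] ae sF by auto
    then show False using z by simp
  qed
  ultimately show ?thesis by simp
qed

lemma mix_zero:
  assumes "sets N = sets M"
  shows "mix 0 M N = M"
  by (rule measure_eqI) (simp_all add: emeasure_mix[OF assms])

lemma surv_measurable:
  fixes M :: "real measure"
  assumes sM: "sets M = sets borel" and fin: "finite_measure M"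
  shows "(\<lambda>t. measure M {t<..}) \<in> borel_measurable borel"
    "\<And>t. measure M {t<..} = measure M (space M) - measure M {..t}"
proof -
  interpret finite_measure M by (rule fin)
  have spM: "space M = UNIV" using sets_eq_imp_space_eq[OF sM] by simp
  show eq: "\<And>t. measure M {t<..} = measure M (space M) - measure M {..t}"
  proof -
    fix t :: real
    have "measure M (space M - {..t}) = measure M (space M) - measure M {..t}"
      by (rule finite_measure_compl) (simp add: sM)
    moreover have "space M - {..t} = {t<..}" using spM by auto
    ultimately show "measure M {t<..} = measure M (space M) - measure M {..t}" by simp
  qed
  have mono: "mono (\<lambda>x. measure M {..x})"
    by (auto simp: mono_def intro!: finite_measure_mono simp: sM)
  have "(\<lambda>x. measure M {..x}) \<in> borel_measurable borel" by (rule borel_measurable_mono[OF mono])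
  then show "(\<lambda>t. measure M {t<..}) \<in> borel_measurable borel" unfolding eq by measurable
qed

lemma surv_rcont:
  fixes M :: "real measure"
  assumes sM: "sets M = sets borel" and fin: "finite_measure M"
  shows "continuous (at_right t) (\<lambda>t. measure M {t<..})"
proof -
  interpret finite_borel_measure M using fin sM by (simp add: finite_borel_measure_def finite_borel_measure_axioms_def)
  have "(\<lambda>t. measure M {t<..}) = (\<lambda>t. measure M (space M) - cdf M t)"
    using surv_measurable(2)[OF sM fin] by (simp add: cdf_def)
  then show ?thesis by (simp add: continuous_intros cdf_is_right_cont)
qed

lemma surv_has_integral:
  fixes M :: "real measure"
  assumes sM: "sets M = sets borel" and fin: "finite_measure M" and nn: "AE x in M. 0 \<le> x" and s: "s > 0"
  shows "((\<lambda>t. exp (- s * t) * measure M {t<..}) has_integral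
            ((measure M (space M) - (\<integral>x. exp (- s * x) \<partial>M)) / s)) {0..}"
proof -
  interpret finite_measure M by (rule fin)
  define r where "r = (measure M (space M) - (\<integral>x. exp (- s * x) \<partial>M)) / s"
  have r0: "0 \<le> r"
  proof -
    have "(\<integral>x. exp (- s * x) \<partial>M) \<le> (\<integral>x. 1 \<partial>M)"
      using lap_integrable[OF sM fin nn, of s] s nn
      by (intro integral_mono_AE) (auto elim!: eventually_mono simp: mult_nonneg_nonneg)
    then show ?thesis using s unfolding r_def by simp
  qed
  define f where "f = (\<lambda>t. exp (- s * t) * indicator {0..} t * measure M {t<..})"
  have fm: "f \<in> borel_measurable borel" unfolding f_def using surv_measurable(1)[OF sM fin] by measurable
  have "(\<integral>\<^sup>+t. ennreal (f t) \<partial>lborel) = (\<integral>\<^sup>+t. ennreal (exp (- s * t) * indicator {0..} t) * emeasure M {t<..} \<partial>lborel)"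
    unfolding f_def by (intro nn_integral_cong) (simp add: emeasure_eq_measure ennreal_mult'')
  also have "\<dots> = ennreal r" unfolding r_def by (rule surv_laplace_nn[OF sM fin nn s])
  finally have "(f has_integral r) UNIV"
    using fm r0 by (intro nn_integral_has_integral) (auto simp: f_def)
  moreover have "f = (\<lambda>t. if t \<in> {0..} then exp (- s * t) * measure M {t<..} else 0)"
    unfolding f_def by (auto simp: indicator_def)
  ultimately have "((\<lambda>t. if t \<in> {0..} then exp (- s * t) * measure M {t<..} else 0) has_integral r) UNIV"
    by (simp only:)
  then show ?thesis unfolding r_def[symmetric] has_integral_restrict_UNIV .
qed


lemma alg_core:
  fixes lam K A Dn s v mp mh gp gh :: real
  assumes "A \<noteq> 0" "Dn \<noteq> 0" "s \<noteq> 0" "mp \<noteq> 0" "mh \<noteq> 0" "K * A = lam" "v = A * s / Dn"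
  shows "- (1 / s) * ((- (lam * (mh - mp) * s) * Dn - A * s * (lam * (gh - gp))) / (Dn * Dn))
       - K * ((mp - mh) * ((1 - v) / s) + mh * ((1 - v * v * ((1 - gh) / (s * mh))) / s)
            - mp * ((1 - v * v * ((1 - gp) / (s * mp))) / s)) = 0"
proof -
  have e: "K * ((mp - mh) * ((1 - v) / s) + mh * ((1 - v * v * ((1 - gh) / (s * mh))) / s)
            - mp * ((1 - v * v * ((1 - gp) / (s * mp))) / s)) = K * ((mh - mp) * v / s + v * v * (gh - gp) / (s * s))"
    using assms by (simp add: field_simps)
  show ?thesis unfolding e using assms(1-5) by (simp add: assms(7) flip: assms(6)) (simp add: field_simps)
qed

lemma const_integral_space:
  fixes M :: "real measure"
  assumes "finite_measure M"
  shows "(\<integral>x. exp (- 0 * x) \<partial>M) = measure M (space M)"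
  by simp

theorem corollary1:
  fixes lam :: real and Fp Fh :: "real measure"
    and W :: "real \<Rightarrow> real measure" and c :: "real \<Rightarrow> real"
  assumes lam_pos: "lam > 0"
    and Fp: "nonneg_distr Fp" "integrable Fp (\<lambda>x. x)" "phase_type Fp"
    and Fh: "nonneg_distr Fh" "integrable Fh (\<lambda>x. x)" "heavy_tailed Fh"
    and stable: "lam * mean Fp < 1"
    and W: "\<forall>\<epsilon>\<in>{0..<1}. lam * mean (mix \<epsilon> Fp Fh) < 1 \<longrightarrow>
              mg1_workload lam (mix \<epsilon> Fp Fh) (W \<epsilon>)"
    and c_laplace: "\<forall>s>0. \<exists>D.
              ((\<lambda>\<epsilon>. \<integral>x. exp (- s * x) \<partial>(W \<epsilon>)) has_real_derivative D) (at 0 within {0..<1}) \<and>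
              ((\<lambda>t. exp (- s * t) * c t) has_integral (- (1 / s) * D)) {0..}"
    and c_rcont: "\<forall>t\<ge>0. continuous (at_right t) c"
  shows "\<forall>t\<ge>0. c t =
           lam / (1 - lam * mean Fp) *
             ((mean Fp - mean Fh) * measure (W 0) {t<..}
              + mean Fh * measure ((W 0 \<star> W 0) \<star> excess Fh) {t<..}
              - mean Fp * measure ((W 0 \<star> W 0) \<star> excess Fp) {t<..})"
proof -
  have sFp: "sets Fp = sets borel" and PFp: "prob_space Fp" and nFp: "AE x in Fp. 0 \<le> x"
    using Fp(1) unfolding nonneg_distr_def by auto
  have sFh: "sets Fh = sets borel" and PFh: "prob_space Fh" and nFh: "AE x in Fh. 0 \<le> x"
    using Fh(1) unfolding nonneg_distr_def by auto
  have finFp: "finite_measure Fp" using PFp unfolding prob_space_def by auto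
  have finFh: "finite_measure Fh" using PFh unfolding prob_space_def by auto
  have mp: "mean Fp > 0" by (rule mean_pos_phase[OF Fp(3) Fp(2)])
  have mh: "mean Fh > 0" by (rule mean_pos_heavy[OF Fh(1) Fh(2) Fh(3)])
  have sN: "sets Fh = sets Fp" using sFp sFh by simp
  have mix_mean: "mean (mix e Fp Fh) = (1 - e) * mean Fp + e * mean Fh" if "0 \<le> e" "e \<le> 1" for e
    unfolding mean_def by (rule integral_mix[OF sN sFp _ nFp nFh Fp(2) Fh(2) that]) simp
  have mix_lap: "(\<integral>x. exp (- s * x) \<partial>mix e Fp Fh) = (1 - e) * (\<integral>x. exp (- s * x) \<partial>Fp) + e * (\<integral>x. exp (- s * x) \<partial>Fh)"
    if "0 \<le> e" "e \<le> 1" "s > 0" for e s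
    by (rule integral_mix[OF sN sFp _ _ _ lap_integrable[OF sFp finFp nFp] lap_integrable[OF sFh finFh nFh] that(1,2)])
       (use that in auto)
  define V where "V = W 0"
  have m0: "mix 0 Fp Fh = Fp" by (rule mix_zero[OF sN])
  have "lam * mean (mix 0 Fp Fh) < 1" using stable m0 by simp
  then have "mg1_workload lam (mix 0 Fp Fh) (W 0)" using W by auto
  then have mgV: "mg1_workload lam Fp V" using m0 unfolding V_def by simp
  have sV: "sets V = sets borel" and PV: "prob_space V" and nV: "AE x in V. 0 \<le> x"
    using mgV unfolding mg1_workload_def nonneg_distr_def by auto
  have finV: "finite_measure V" using PV unfolding prob_space_def by auto
  have lapV: "(\<integral>x. exp (- s * x) \<partial>V) = (1 - lam * mean Fp) * s / (s - lam * (1 - (\<integral>x. exp (- s * x) \<partial>Fp)))"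
    if "s > 0" for s using mgV that unfolding mg1_workload_def by auto
  have mV: "measure V (space V) = 1" using PV by (simp add: prob_space.prob_space)
  define VV where "VV = (V \<star> V)"
  have sVV: "sets VV = sets borel" unfolding VV_def by simp
  have finVV: "finite_measure VV" unfolding VV_def by (rule convolution_finite[OF finV finV sV sV])
  have nVV: "AE x in VV. 0 \<le> x" unfolding VV_def by (rule conv_AE_nonneg[OF sV sV finV finV nV nV])
  have lapVV: "(\<integral>x. exp (- s * x) \<partial>VV) = (\<integral>x. exp (- s * x) \<partial>V) * (\<integral>x. exp (- s * x) \<partial>V)" for s
    unfolding VV_def by (rule lap_conv[OF sV sV finV finV])
  note Ep = excess_facts[OF Fp(1) Fp(2) mp]
  note Eh = excess_facts[OF Fh(1) Fh(2) mh]
  have finEp: "finite_measure (excess Fp)" using Ep(3) unfolding prob_space_def by auto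
  have finEh: "finite_measure (excess Fh)" using Eh(3) unfolding prob_space_def by auto
  define Xp where "Xp = (VV \<star> excess Fp)"
  define Xh where "Xh = (VV \<star> excess Fh)"
  have sXp: "sets Xp = sets borel" unfolding Xp_def by simp
  have sXh: "sets Xh = sets borel" unfolding Xh_def by simp
  have finXp: "finite_measure Xp" unfolding Xp_def by (rule convolution_finite[OF finVV finEp Ep(1) sVV])
  have finXh: "finite_measure Xh" unfolding Xh_def by (rule convolution_finite[OF finVV finEh Eh(1) sVV])
  have nXp: "AE x in Xp. 0 \<le> x" unfolding Xp_def by (rule conv_AE_nonneg[OF sVV Ep(1) finVV finEp nVV Ep(2)])
  have nXh: "AE x in Xh. 0 \<le> x" unfolding Xh_def by (rule conv_AE_nonneg[OF sVV Eh(1) finVV finEh nVV Eh(2)])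
  have lapXp: "(\<integral>x. exp (- s * x) \<partial>Xp) = (\<integral>x. exp (- s * x) \<partial>VV) * (\<integral>x. exp (- s * x) \<partial>excess Fp)" for s
    unfolding Xp_def by (rule lap_conv[OF sVV Ep(1) finVV finEp])
  have lapXh: "(\<integral>x. exp (- s * x) \<partial>Xh) = (\<integral>x. exp (- s * x) \<partial>VV) * (\<integral>x. exp (- s * x) \<partial>excess Fh)" for s
    unfolding Xh_def by (rule lap_conv[OF sVV Eh(1) finVV finEh])
  have mEp: "measure (excess Fp) (space (excess Fp)) = 1" using Ep(3) by (simp add: prob_space.prob_space)
  have mEh: "measure (excess Fh) (space (excess Fh)) = 1" using Eh(3) by (simp add: prob_space.prob_space)
  have mXp: "measure Xp (space Xp) = 1"
    using lapXp[of 0] lapVV[of 0] mV mEp by simp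
  have mXh: "measure Xh (space Xh) = 1"
    using lapXh[of 0] lapVV[of 0] mV mEh by simp
  define K where "K = lam / (1 - lam * mean Fp)"
  define R where "R = (\<lambda>t. K * ((mean Fp - mean Fh) * measure V {t<..}
              + mean Fh * measure Xh {t<..} - mean Fp * measure Xp {t<..}))"
  have main: "c t = R t" if t: "t \<ge> 0" for t
  proof -
    have "c t - R t = 0"
    proof (rule laplace_unique[of "\<lambda>t. c t - R t", OF _ _ t])
      fix t :: real assume "t \<ge> 0"
      have "continuous (at_right t) R" unfolding R_def
        by (intro continuous_intros surv_rcont sV sXh sXp finV finXh finXp)
      then show "continuous (at_right t) (\<lambda>t. c t - R t)"
        using c_rcont \<open>t \<ge> 0\<close> by (intro continuous_intros) auto
    next
      fix s :: real assume s: "s > 0"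
      define mp' where "mp' = mean Fp"
      define mh' where "mh' = mean Fh"
      define gp where "gp = (\<integral>x. exp (- s * x) \<partial>Fp)"
      define gh where "gh = (\<integral>x. exp (- s * x) \<partial>Fh)"
      define v where "v = (\<integral>x. exp (- s * x) \<partial>V)"
      define A where "A = 1 - lam * mp'"
      define Dn where "Dn = s - lam * (1 - gp)"
      have A0: "A > 0" using stable unfolding A_def mp'_def by simp
      have gp_ge: "1 - s * mp' \<le> gp"
      proof -
        have "(\<integral>x. 1 - s * x \<partial>Fp) \<le> gp" unfolding gp_def
        proof (rule integral_mono_AE)
          show "integrable Fp (\<lambda>x. 1 - s * x)"
            using Fp(2) finite_measure.integrable_const[OF finFp]
            by (intro Bochner_Integration.integrable_diff integrable_mult_right) auto
          show "integrable Fp (\<lambda>x. exp (- s * x))" by (rule lap_integrable[OF sFp finFp nFp]) (use s in auto)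
          show "AE x in Fp. 1 - s * x \<le> exp (- s * x)"
            using exp_ge_add_one_self[of "- s * _"] by auto
        qed
        moreover have "(\<integral>x. 1 - s * x \<partial>Fp) = 1 - s * mp'"
        proof -
          have "(\<integral>x. 1 - s * x \<partial>Fp) = (\<integral>x. 1 \<partial>Fp) - (\<integral>x. s * x \<partial>Fp)"
            using Fp(2) finite_measure.integrable_const[OF finFp]
            by (intro Bochner_Integration.integral_diff integrable_mult_right) auto
          then show ?thesis using PFp by (simp add: mp'_def mean_def prob_space.prob_space)
        qed
        ultimately show ?thesis by simp
      qed
      have Dn0: "Dn > 0"
      proof -
        have "lam * (1 - gp) \<le> lam * (s * mp')" using gp_ge lam_pos by (intro mult_left_mono) auto
        moreover have "lam * (s * mp') < s" using stable s unfolding mp'_def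
          by (metis mult.commute mult.left_commute mult_less_cancel_left_pos mult.right_neutral)
        ultimately show ?thesis unfolding Dn_def by simp
      qed
      have vA: "v = A * s / Dn" unfolding v_def A_def Dn_def gp_def mp'_def using lapV[OF s] by simp
      obtain D where Dd: "((\<lambda>\<epsilon>. \<integral>x. exp (- s * x) \<partial>(W \<epsilon>)) has_real_derivative D) (at 0 within {0..<1})"
        and Dc: "((\<lambda>t. exp (- s * t) * c t) has_integral (- (1 / s) * D)) {0..}"
        using c_laplace s by blast
      define D0 where "D0 = ((- (lam * (mh' - mp') * s)) * Dn - A * s * (lam * (gh - gp))) / (Dn * Dn)"
      have DD0: "D = D0"
      proof -
        define \<Phi> where "\<Phi> = (\<lambda>e. (1 - lam * ((1 - e) * mp' + e * mh')) * s / (s - lam * (1 - ((1 - e) * gp + e * gh))))"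
        have dN: "((\<lambda>e. (1 - lam * ((1 - e) * mp' + e * mh')) * s) has_real_derivative (- (lam * (mh' - mp') * s))) (at 0)"
          by (auto intro!: derivative_eq_intros simp: algebra_simps)
        have dDn: "((\<lambda>e. s - lam * (1 - ((1 - e) * gp + e * gh))) has_real_derivative (lam * (gh - gp))) (at 0)"
          by (auto intro!: derivative_eq_intros simp: algebra_simps)
        have "(\<Phi> has_real_derivative D0) (at 0)"
          using DERIV_divide[OF dN dDn] Dn0 unfolding \<Phi>_def D0_def Dn_def A_def by simp
        then have dPhi: "(\<Phi> has_real_derivative D0) (at 0 within {0..<1})"
          by (rule has_field_derivative_at_within)
        define d where "d = (1 - lam * mp') / (lam * (\<bar>mh' - mp'\<bar> + 1))"
        have d0: "d > 0" unfolding d_def using A0 lam_pos unfolding A_def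
          by (intro divide_pos_pos mult_pos_pos) auto
        have eq: "\<Phi> e = (\<integral>x. exp (- s * x) \<partial>(W e))" if e: "e \<in> {0..<1}" "dist e 0 < d" for e
        proof -
          have e0: "0 \<le> e" "e \<le> 1" "e < d" using e by (auto simp: dist_real_def)
          have "e * (lam * (\<bar>mh' - mp'\<bar> + 1)) < 1 - lam * mp'"
            using e0(3) lam_pos unfolding d_def by (simp add: pos_less_divide_eq)
          moreover have "lam * e * (mh' - mp') \<le> e * (lam * (\<bar>mh' - mp'\<bar> + 1))"
          proof -
            have "lam * e * (mh' - mp') \<le> lam * e * (\<bar>mh' - mp'\<bar> + 1)"
              using e0 lam_pos by (intro mult_left_mono) auto
            then show ?thesis by (simp add: algebra_simps)
          qed
          moreover have "lam * mean (mix e Fp Fh) = lam * mp' + lam * e * (mh' - mp')"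
            unfolding mix_mean[OF e0(1,2)] mp'_def mh'_def by (simp add: algebra_simps)
          ultimately have lt: "lam * mean (mix e Fp Fh) < 1" by (simp add: algebra_simps)
          then have "mg1_workload lam (mix e Fp Fh) (W e)" using W e by auto
          then have "(\<integral>x. exp (- s * x) \<partial>(W e)) = (1 - lam * mean (mix e Fp Fh)) * s /
                (s - lam * (1 - (\<integral>x. exp (- s * x) \<partial>mix e Fp Fh)))"
            using s unfolding mg1_workload_def by auto
          then show ?thesis unfolding \<Phi>_def using mix_mean[OF e0(1,2)] mix_lap[OF e0(1,2) s]
            by (simp add: mp'_def mh'_def gp_def gh_def)
        qed
        have d2: "((\<lambda>e. \<integral>x. exp (- s * x) \<partial>(W e)) has_real_derivative D0) (at 0 within {0..<1})"
          by (rule has_field_derivative_transform_within[OF dPhi d0 _ eq]) auto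
        have "at (0::real) within {0..<1} = at 0 within {0..}"
          by (rule at_within_nhd[of 0 "{..<1}"]) auto
        then have nb: "at (0::real) within {0..<1} \<noteq> bot" by (simp add: at_within_Ici_at_right)
        show ?thesis by (rule has_field_derivative_unique[OF Dd d2 nb])
      qed
      have iV: "((\<lambda>t. exp (- s * t) * measure V {t<..}) has_integral ((1 - v) / s)) {0..}"
        using surv_has_integral[OF sV finV nV s] mV unfolding v_def by simp
      have iXh: "((\<lambda>t. exp (- s * t) * measure Xh {t<..}) has_integral ((1 - v * v * ((1 - gh) / (s * mh'))) / s)) {0..}"
        using surv_has_integral[OF sXh finXh nXh s] mXh lapXh[of s] lapVV[of s] Eh(4)[OF s]
        unfolding v_def gh_def mh'_def by simp
      have iXp: "((\<lambda>t. exp (- s * t) * measure Xp {t<..}) has_integral ((1 - v * v * ((1 - gp) / (s * mp'))) / s)) {0..}"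
        using surv_has_integral[OF sXp finXp nXp s] mXp lapXp[of s] lapVV[of s] Ep(4)[OF s]
        unfolding v_def gp_def mp'_def by simp
      have iR: "((\<lambda>t. K * ((mp' - mh') * (exp (- s * t) * measure V {t<..}) + mh' * (exp (- s * t) * measure Xh {t<..})
            - mp' * (exp (- s * t) * measure Xp {t<..}))) has_integral
           K * ((mp' - mh') * ((1 - v) / s) + mh' * ((1 - v * v * ((1 - gh) / (s * mh'))) / s)
            - mp' * ((1 - v * v * ((1 - gp) / (s * mp'))) / s))) {0..}"
        by (intro has_integral_mult_right has_integral_add has_integral_diff iV iXh iXp)
      have "((\<lambda>t. exp (- s * t) * c t - K * ((mp' - mh') * (exp (- s * t) * measure V {t<..}) + mh' * (exp (- s * t) * measure Xh {t<..})
            - mp' * (exp (- s * t) * measure Xp {t<..}))) has_integral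
           - (1 / s) * D0 - K * ((mp' - mh') * ((1 - v) / s) + mh' * ((1 - v * v * ((1 - gh) / (s * mh'))) / s)
            - mp' * ((1 - v * v * ((1 - gp) / (s * mp'))) / s))) {0..}"
        using has_integral_diff[OF Dc iR] DD0 by simp
      moreover have "- (1 / s) * D0 - K * ((mp' - mh') * ((1 - v) / s) + mh' * ((1 - v * v * ((1 - gh) / (s * mh'))) / s)
            - mp' * ((1 - v * v * ((1 - gp) / (s * mp'))) / s)) = 0"
        unfolding D0_def
        by (rule alg_core) (use A0 Dn0 s mp mh vA in \<open>auto simp: mp'_def mh'_def K_def A_def\<close>)
      moreover have "(\<lambda>t. exp (- s * t) * c t - K * ((mp' - mh') * (exp (- s * t) * measure V {t<..}) + mh' * (exp (- s * t) * measure Xh {t<..})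
            - mp' * (exp (- s * t) * measure Xp {t<..}))) = (\<lambda>t. exp (- s * t) * (c t - R t))"
        unfolding R_def mp'_def mh'_def by (simp add: algebra_simps)
      ultimately show "((\<lambda>t. exp (- s * t) * (c t - R t)) has_integral 0) {0..}" by simp
    qed
    then show ?thesis by simp
  qed
  show ?thesis using main unfolding R_def K_def Xh_def Xp_def VV_def V_def by simp
qed

end
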